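(* Let $X_1,\dots,X_n$ be i.i.d. $\mathsf{Bernoulli}(p)$ with $p\in[\frac12,1)$, and let $Y_k=X_k\oplus V_k$ for $k=1,\dots,n$, where $V_1,\dots,V_n$ are i.i.d. $\mathsf{Bernoulli}(\alpha)$, independent of $X^n$, with $\alpha\in[0,\frac12)$ and $\bar\alpha>p$. Let $q=\alpha\bar p+\bar\alpha p$ and $$\zeta_n(\varepsilon)=\frac{\bar\alpha^n-\varepsilon^n}{(\bar\alpha p)^n-(\alpha\bar p)^n}.$$ Then there exists $\varepsilon_{\mathsf L}<\bar\alpha$ such that for all $\varepsilon\in[\varepsilon_{\mathsf L},\bar\alpha]$, $$\underline{\mathcal{h}}_n^n(\varepsilon)=1-\zeta_n(\varepsilon)q^n,$$ and the $2^n$-ary Z-channel $\mathsf{Z}_n(\zeta_n(\varepsilon))$ achieves $\underline{\mathcal{h}}_n(\varepsilon)$ on this interval.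
   Context: $\bar a=1-a$; $\oplus$ is addition mod 2; $\mathsf{Bernoulli}(p)$ has $\Pr(\cdot=1)=p$. $\mathsf{P}_{\mathsf{c}}(X^n)=\max_{x^n}P_{X^n}(x^n)$ and $\mathsf{P}_{\mathsf{c}}(X^n|Z^n)=\sum_{z^n}\max_{x^n}P_{X^nZ^n}(x^n,z^n)$. For $\varepsilon\in[\mathsf{P}_{\mathsf{c}}^{1/n}(X^n),\mathsf{P}_{\mathsf{c}}^{1/n}(X^n|Y^n)]$ (here $=[p,\bar\alpha]$), $$\underline{\mathcal{h}}_n(\varepsilon)=\sup\{\mathsf{P}_{\mathsf{c}}^{1/n}(Y^n|Z^n): P_{Z^n|Y^n},\ \mathcal{Z}^n=\{0,1\}^n,\ X^n - Y^n - Z^n,\ \mathsf{P}_{\mathsf{c}}^{1/n}(X^n|Z^n)\le\varepsilon\},$$ with $X^n - Y^n - Z^n$ a Markov chain. The $2^n$-ary Z-channel $\mathsf{Z}_n(\gamma)$ is the channel $\mathsf{W}$ with input and output alphabet $\{0,1\}^n$ given by $\mathsf{W}(y|y)=1$ for $y\ne\mathbf 1$, $\mathsf{W}(\mathbf 0|\mathbf 1)=\gamma$, $\mathsf{W}(\mathbf 1|\mathbf 1)=1-\gamma$, where $\mathbf 0=(0,\dots,0)$, $\mathbf 1=(1,\dots,1)$. "Achieves" means it satisfies the privacy constraint and attains the supremum. *)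

theory Defs
  imports Complex_Main
begin

text \<open>Binary n-tuples are represented as boolean lists of length n (True = 1).\<close>

definition words :: "nat \<Rightarrow> bool list set" where
  "words n = {xs. length xs = n}"

definition bern :: "real \<Rightarrow> bool \<Rightarrow> real" where
  "bern r b = (if b then r else 1 - r)"

text \<open>Joint pmf of (X^n, Y^n): X_k iid Bernoulli(p), Y_k = X_k xor V_k, V_k iid Bernoulli(alpha).\<close>
definition PXY :: "real \<Rightarrow> real \<Rightarrow> nat \<Rightarrow> bool list \<Rightarrow> bool list \<Rightarrow> real" where
  "PXY p \<alpha> n x y = (\<Prod>k<n. bern p (x ! k) * bern \<alpha> ((x ! k) \<noteq> (y ! k)))"

definition PY :: "real \<Rightarrow> real \<Rightarrow> nat \<Rightarrow> bool list \<Rightarrow> real" where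
  "PY p \<alpha> n y = (\<Sum>x\<in>words n. PXY p \<alpha> n x y)"

text \<open>A channel P_{Z|Y} with input and output alphabet {0,1}^n: W y z = P_{Z|Y}(z|y).\<close>
definition is_channel :: "nat \<Rightarrow> (bool list \<Rightarrow> bool list \<Rightarrow> real) \<Rightarrow> bool" where
  "is_channel n W \<longleftrightarrow> (\<forall>y\<in>words n. (\<forall>z\<in>words n. 0 \<le> W y z) \<and> (\<Sum>z\<in>words n. W y z) = 1)"

text \<open>P_c(X^n|Z^n) = sum_z max_x P_{X^n Z^n}(x,z), with Markov chain X - Y - Z.\<close>
definition PcXZ :: "real \<Rightarrow> real \<Rightarrow> nat \<Rightarrow> (bool list \<Rightarrow> bool list \<Rightarrow> real) \<Rightarrow> real" where
  "PcXZ p \<alpha> n W = (\<Sum>z\<in>words n. Max ((\<lambda>x. \<Sum>y\<in>words n. PXY p \<alpha> n x y * W y z) ` words n))"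

definition PcYZ :: "real \<Rightarrow> real \<Rightarrow> nat \<Rightarrow> (bool list \<Rightarrow> bool list \<Rightarrow> real) \<Rightarrow> real" where
  "PcYZ p \<alpha> n W = (\<Sum>z\<in>words n. Max ((\<lambda>y. PY p \<alpha> n y * W y z) ` words n))"

definition feasible :: "real \<Rightarrow> real \<Rightarrow> nat \<Rightarrow> real \<Rightarrow> (bool list \<Rightarrow> bool list \<Rightarrow> real) \<Rightarrow> bool" where
  "feasible p \<alpha> n \<epsilon> W \<longleftrightarrow> is_channel n W \<and> root n (PcXZ p \<alpha> n W) \<le> \<epsilon>"

definition hlow :: "real \<Rightarrow> real \<Rightarrow> nat \<Rightarrow> real \<Rightarrow> real" where
  "hlow p \<alpha> n \<epsilon> = Sup {root n (PcYZ p \<alpha> n W) | W. feasible p \<alpha> n \<epsilon> W}"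

definition zchan :: "nat \<Rightarrow> real \<Rightarrow> bool list \<Rightarrow> bool list \<Rightarrow> real" where
  "zchan n \<gamma> y z =
     (if y = replicate n True then
        (if z = replicate n False then \<gamma> else if z = replicate n True then 1 - \<gamma> else 0)
      else (if z = y then 1 else 0))"

definition achieves :: "real \<Rightarrow> real \<Rightarrow> nat \<Rightarrow> real \<Rightarrow> (bool list \<Rightarrow> bool list \<Rightarrow> real) \<Rightarrow> bool" where
  "achieves p \<alpha> n \<epsilon> W \<longleftrightarrow> feasible p \<alpha> n \<epsilon> W \<and> root n (PcYZ p \<alpha> n W) = hlow p \<alpha> n \<epsilon>"

definition zeta :: "real \<Rightarrow> real \<Rightarrow> nat \<Rightarrow> real \<Rightarrow> real" where
  "zeta p \<alpha> n \<epsilon> = ((1 - \<alpha>) ^ n - \<epsilon> ^ n) / (((1 - \<alpha>) * p) ^ n - (\<alpha> * (1 - p)) ^ n)"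

end

theory Submission
  imports Defs
begin

lemma words_0: "words 0 = {[]}" by (auto simp: words_def)

lemma words_Suc: "words (Suc n) = Cons True ` words n \<union> Cons False ` words n"
proof
  show "words (Suc n) \<subseteq> Cons True ` words n \<union> Cons False ` words n"
  proof
    fix x assume "x \<in> words (Suc n)"
    then obtain b ys where "x = b # ys" "length ys = n" by (auto simp: words_def length_Suc_conv)
    then show "x \<in> Cons True ` words n \<union> Cons False ` words n" by (cases b) (auto simp: words_def)
  qed
qed (auto simp: words_def)

lemma finite_words: "finite (words n)"
  by (induction n) (auto simp: words_0 words_Suc)

lemma sum_prod_words:
  fixes g :: "nat \<Rightarrow> bool \<Rightarrow> real"
  shows "(\<Sum>x\<in>words n. \<Prod>k<n. g k (x!k)) = (\<Prod>k<n. g k True + g k False)"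
proof (induction n arbitrary: g)
  case 0 then show ?case by (simp add: words_0)
next
  case (Suc n)
  have inj: "inj_on (Cons b) A" for b :: bool and A by (simp add: inj_on_def)
  have "(\<Sum>x\<in>words (Suc n). \<Prod>k<Suc n. g k (x!k))
      = (\<Sum>x\<in>Cons True ` words n. \<Prod>k<Suc n. g k (x!k)) + (\<Sum>x\<in>Cons False ` words n. \<Prod>k<Suc n. g k (x!k))"
    unfolding words_Suc by (rule sum.union_disjoint) (auto simp: finite_words)
  also have "\<dots> = (\<Sum>x\<in>words n. g 0 True * (\<Prod>k<n. g (Suc k) (x!k))) + (\<Sum>x\<in>words n. g 0 False * (\<Prod>k<n. g (Suc k) (x!k)))"
    by (simp add: sum.reindex inj prod.lessThan_Suc_shift del: prod.lessThan_Suc)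
  also have "\<dots> = (g 0 True + g 0 False) * (\<Prod>k<n. g (Suc k) True + g (Suc k) False)"
    proof -
    have h: "(\<Sum>x\<in>words n. c * (\<Prod>k<n. g (Suc k) (x!k))) = c * (\<Prod>k<n. g (Suc k) True + g (Suc k) False)" for c
      using Suc.IH[of "\<lambda>k. g (Suc k)"] by (simp add: sum_distrib_left[symmetric])
    show ?thesis unfolding h by (simp add: distrib_right)
  qed
  also have "\<dots> = (\<Prod>k<Suc n. g k True + g k False)" by (simp add: prod.lessThan_Suc_shift del: prod.lessThan_Suc)
  finally show ?case .
qed

definition qq :: "real \<Rightarrow> real \<Rightarrow> real" where "qq p \<alpha> = \<alpha> * (1 - p) + (1 - \<alpha>) * p"
definition DD :: "real \<Rightarrow> real \<Rightarrow> nat \<Rightarrow> real" where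
  "DD p \<alpha> n = ((1 - \<alpha>) * p) ^ n - (\<alpha> * (1 - p)) ^ n"

lemma PY_prod: "PY p \<alpha> n y = (\<Prod>k<n. if y!k then qq p \<alpha> else 1 - qq p \<alpha>)"
proof -
  have "PY p \<alpha> n y = (\<Prod>k<n. bern p True * bern \<alpha> (True \<noteq> y!k) + bern p False * bern \<alpha> (False \<noteq> y!k))"
    unfolding PY_def PXY_def using sum_prod_words[where n=n and g="\<lambda>k a. bern p a * bern \<alpha> (a \<noteq> y!k)"] by simp
  also have "\<dots> = (\<Prod>k<n. if y!k then qq p \<alpha> else 1 - qq p \<alpha>)"
    by (rule prod.cong) (auto simp: bern_def qq_def algebra_simps)
  finally show ?thesis .
qed

lemma sum_PY: "(\<Sum>y\<in>words n. PY p \<alpha> n y) = 1"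
  unfolding PY_prod using sum_prod_words[where n=n and g="\<lambda>k b. if b then qq p \<alpha> else 1 - qq p \<alpha>"] by simp

lemma PXY_diag: "PXY p \<alpha> n y y = (\<Prod>k<n. bern p (y!k) * (1 - \<alpha>))"
  by (simp add: PXY_def bern_def)

lemma sum_diag: "(\<Sum>y\<in>words n. PXY p \<alpha> n y y) = (1 - \<alpha>) ^ n"
  unfolding PXY_diag using sum_prod_words[where n=n and g="\<lambda>k b. bern p b * (1 - \<alpha>)"]
  by (simp add: bern_def algebra_simps)


context
  fixes p \<alpha> :: real
  assumes p1: "1/2 \<le> p" and p2: "p < 1" and a1: "0 \<le> \<alpha>" and a2: "\<alpha> < 1/2" and pa: "1 - \<alpha> > p"
begin

lemma q_facts: "1/2 \<le> qq p \<alpha>" "qq p \<alpha> \<le> p" "0 < qq p \<alpha>"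
proof -
  have "qq p \<alpha> - 1/2 = (1 - 2*\<alpha>) * (p - 1/2)" by (simp add: qq_def algebra_simps)
  moreover have "(1 - 2*\<alpha>) * (p - 1/2) \<ge> 0" using a2 p1 by simp
  ultimately show "1/2 \<le> qq p \<alpha>" "0 < qq p \<alpha>" by auto
  have "p - qq p \<alpha> = \<alpha> * (2*p - 1)" by (simp add: qq_def algebra_simps)
  moreover have "\<alpha> * (2*p - 1) \<ge> 0" using a1 p1 by simp
  ultimately show "qq p \<alpha> \<le> p" by auto
qed

lemma coord_u: "(bern p b * (1-\<alpha>)) * qq p \<alpha> \<le> ((1-\<alpha>)*p) * (if b then qq p \<alpha> else 1 - qq p \<alpha>)"
proof (cases b)
  case True then show ?thesis by (simp add: bern_def)
next
  case False
  have "(1 - p) * qq p \<alpha> \<le> p * (1 - qq p \<alpha>)" using q_facts by (simp add: algebra_simps)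
  then have "(1-\<alpha>) * ((1 - p) * qq p \<alpha>) \<le> (1-\<alpha>) * (p * (1 - qq p \<alpha>))"
    by (rule mult_left_mono) (use a2 in simp)
  then show ?thesis using False by (simp add: bern_def algebra_simps)
qed

lemma ap_le: "\<alpha> * (1 - p) \<le> (1 - \<alpha>) * p"
  using mult_mono[of \<alpha> "1-\<alpha>" "1-p" p] a1 a2 p1 p2 by simp

lemma coord_v: "(\<alpha>*(1-p)) * (if b then qq p \<alpha> else 1 - qq p \<alpha>) \<le> (bern p a * bern \<alpha> (a \<noteq> b)) * qq p \<alpha>"
proof -
  have q: "1/2 \<le> qq p \<alpha>" "0 < qq p \<alpha>" using q_facts by auto
  show ?thesis
  proof (cases a; cases b)
    assume "a" "b" then show ?thesis using q by (simp add: bern_def) (metis ap_le mult.commute)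
  next
    assume "a" "\<not> b"
    have "(1-p) * (1 - qq p \<alpha>) \<le> p * qq p \<alpha>" using mult_mono[of "1-p" p "1 - qq p \<alpha>" "qq p \<alpha>"] q q_facts(2) p1 p2 by simp
    then have "\<alpha> * ((1-p) * (1 - qq p \<alpha>)) \<le> \<alpha> * (p * qq p \<alpha>)" by (rule mult_left_mono) (use a1 in simp)
    then show ?thesis using \<open>a\<close> \<open>\<not> b\<close> by (simp add: bern_def algebra_simps)
  next
    assume "\<not> a" "b" then show ?thesis by (simp add: bern_def algebra_simps)
  next
    assume "\<not> a" "\<not> b"
    have "\<alpha> * (1 - qq p \<alpha>) \<le> (1-\<alpha>) * qq p \<alpha>" using mult_mono[of \<alpha> "1-\<alpha>" "1 - qq p \<alpha>" "qq p \<alpha>"] q q_facts(2) p2 a1 a2 by simp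
    then have "(1-p) * (\<alpha> * (1 - qq p \<alpha>)) \<le> (1-p) * ((1-\<alpha>) * qq p \<alpha>)" by (rule mult_left_mono) (use p2 in simp)
    then show ?thesis using \<open>\<not> a\<close> \<open>\<not> b\<close> by (simp add: bern_def algebra_simps)
  qed
qed

lemma key: "(PXY p \<alpha> n y y - PXY p \<alpha> n x y) * qq p \<alpha> ^ n \<le> DD p \<alpha> n * PY p \<alpha> n y"
proof -
  let ?t = "\<lambda>k. if y!k then qq p \<alpha> else 1 - qq p \<alpha>"
  have q: "1/2 \<le> qq p \<alpha>" "0 < qq p \<alpha>" using q_facts by auto
  have "PXY p \<alpha> n y y * qq p \<alpha> ^ n = (\<Prod>k<n. (bern p (y!k) * (1-\<alpha>)) * qq p \<alpha>)"
    by (simp add: PXY_diag prod.distrib)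
  also have "\<dots> \<le> (\<Prod>k<n. ((1-\<alpha>)*p) * ?t k)"
    by (rule prod_mono) (use coord_u q a2 p1 p2 in \<open>auto simp: bern_def intro!: mult_nonneg_nonneg\<close>)
  also have "\<dots> = ((1-\<alpha>)*p)^n * PY p \<alpha> n y" by (simp add: PY_prod prod.distrib)
  finally have u: "PXY p \<alpha> n y y * qq p \<alpha> ^ n \<le> ((1-\<alpha>)*p)^n * PY p \<alpha> n y" .
  have "(\<alpha>*(1-p))^n * PY p \<alpha> n y = (\<Prod>k<n. (\<alpha>*(1-p)) * ?t k)" by (simp add: PY_prod prod.distrib)
  also have "\<dots> \<le> (\<Prod>k<n. (bern p (x!k) * bern \<alpha> (x!k \<noteq> y!k)) * qq p \<alpha>)"
    by (rule prod_mono) (use coord_v q q_facts(2) a1 p2 in \<open>auto simp: bern_def intro!: mult_nonneg_nonneg\<close>)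
  also have "\<dots> = PXY p \<alpha> n x y * qq p \<alpha> ^ n" by (simp add: PXY_def prod.distrib)
  finally have v: "(\<alpha>*(1-p))^n * PY p \<alpha> n y \<le> PXY p \<alpha> n x y * qq p \<alpha> ^ n" .
  show ?thesis using u v by (simp add: DD_def algebra_simps)
qed


lemma words_ne: "replicate n False \<in> words n" by (simp add: words_def)

lemma converse:
  assumes ch: "is_channel n W"
  shows "((1-\<alpha>)^n - PcXZ p \<alpha> n W) * qq p \<alpha> ^ n \<le> DD p \<alpha> n * (1 - PcYZ p \<alpha> n W)"
proof -
  let ?A = "words n"
  let ?q = "qq p \<alpha> ^ n"
  have fin: "finite ?A" by (rule finite_words)
  have ne: "?A \<noteq> {}" using words_ne by blast
  have qn: "0 \<le> ?q" using q_facts by simp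
  have W0: "y \<in> ?A \<Longrightarrow> z \<in> ?A \<Longrightarrow> 0 \<le> W y z" for y z using ch by (simp add: is_channel_def)
  have W1: "y \<in> ?A \<Longrightarrow> (\<Sum>z\<in>?A. W y z) = 1" for y using ch by (simp add: is_channel_def)
  have "\<forall>z\<in>?A. \<exists>y. y \<in> ?A \<and> Max ((\<lambda>y. PY p \<alpha> n y * W y z) ` ?A) = PY p \<alpha> n y * W y z"
  proof
    fix z assume "z \<in> ?A"
    have "Max ((\<lambda>y. PY p \<alpha> n y * W y z) ` ?A) \<in> (\<lambda>y. PY p \<alpha> n y * W y z) ` ?A"
      using fin ne by (intro Max_in) auto
    then show "\<exists>y. y \<in> ?A \<and> Max ((\<lambda>y. PY p \<alpha> n y * W y z) ` ?A) = PY p \<alpha> n y * W y z" by auto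
  qed
  then obtain ys where ys: "\<And>z. z \<in> ?A \<Longrightarrow> ys z \<in> ?A \<and> Max ((\<lambda>y. PY p \<alpha> n y * W y z) ` ?A) = PY p \<alpha> n (ys z) * W (ys z) z"
    by metis
  have colX: "(\<Sum>y\<in>?A. PXY p \<alpha> n (ys z) y * W y z) \<le> Max ((\<lambda>x. \<Sum>y\<in>?A. PXY p \<alpha> n x y * W y z) ` ?A)"
    if "z \<in> ?A" for z
    using ys[OF that] fin by (intro Max_ge) auto
  have percol: "((\<Sum>y\<in>?A. PXY p \<alpha> n y y * W y z) - (\<Sum>y\<in>?A. PXY p \<alpha> n (ys z) y * W y z)) * ?q
     \<le> DD p \<alpha> n * ((\<Sum>y\<in>?A. PY p \<alpha> n y * W y z) - PY p \<alpha> n (ys z) * W (ys z) z)"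
    if z: "z \<in> ?A" for z
  proof -
    let ?y0 = "ys z"
    have y0: "?y0 \<in> ?A" using ys[OF z] by auto
    have "((\<Sum>y\<in>?A. PXY p \<alpha> n y y * W y z) - (\<Sum>y\<in>?A. PXY p \<alpha> n ?y0 y * W y z)) * ?q
        = (\<Sum>y\<in>?A. (PXY p \<alpha> n y y - PXY p \<alpha> n ?y0 y) * ?q * W y z)"
      unfolding sum_subtractf[symmetric] sum_distrib_right by (rule sum.cong) (auto simp: algebra_simps)
    also have "\<dots> = (\<Sum>y\<in>?A - {?y0}. (PXY p \<alpha> n y y - PXY p \<alpha> n ?y0 y) * ?q * W y z)"
      using sum.remove[OF fin y0, of "\<lambda>y. (PXY p \<alpha> n y y - PXY p \<alpha> n ?y0 y) * ?q * W y z"] by simp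
    also have "\<dots> \<le> (\<Sum>y\<in>?A - {?y0}. DD p \<alpha> n * PY p \<alpha> n y * W y z)"
    proof (rule sum_mono)
      fix y assume "y \<in> ?A - {?y0}"
      then have "0 \<le> W y z" using W0 z by auto
      then show "(PXY p \<alpha> n y y - PXY p \<alpha> n ?y0 y) * ?q * W y z \<le> DD p \<alpha> n * PY p \<alpha> n y * W y z"
        using key[of n y ?y0] by (rule mult_right_mono[rotated])
    qed
    also have "\<dots> = DD p \<alpha> n * ((\<Sum>y\<in>?A. PY p \<alpha> n y * W y z) - PY p \<alpha> n ?y0 * W ?y0 z)"
      using sum.remove[OF fin y0, of "\<lambda>y. PY p \<alpha> n y * W y z"]
      by (simp add: sum_distrib_left algebra_simps)
    finally show ?thesis .
  qed
  have sd: "(\<Sum>z\<in>?A. \<Sum>y\<in>?A. PXY p \<alpha> n y y * W y z) = (1-\<alpha>)^n"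
  proof -
    have "(\<Sum>z\<in>?A. \<Sum>y\<in>?A. PXY p \<alpha> n y y * W y z) = (\<Sum>y\<in>?A. PXY p \<alpha> n y y * (\<Sum>z\<in>?A. W y z))"
      by (subst sum.swap) (simp add: sum_distrib_left)
    also have "\<dots> = (\<Sum>y\<in>?A. PXY p \<alpha> n y y)" using W1 by simp
    finally show ?thesis using sum_diag by simp
  qed
  have sy: "(\<Sum>z\<in>?A. \<Sum>y\<in>?A. PY p \<alpha> n y * W y z) = 1"
  proof -
    have "(\<Sum>z\<in>?A. \<Sum>y\<in>?A. PY p \<alpha> n y * W y z) = (\<Sum>y\<in>?A. PY p \<alpha> n y * (\<Sum>z\<in>?A. W y z))"
      by (subst sum.swap) (simp add: sum_distrib_left)
    also have "\<dots> = (\<Sum>y\<in>?A. PY p \<alpha> n y)" using W1 by simp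
    finally show ?thesis using sum_PY by simp
  qed
  have "PcXZ p \<alpha> n W \<ge> (\<Sum>z\<in>?A. \<Sum>y\<in>?A. PXY p \<alpha> n (ys z) y * W y z)"
    unfolding PcXZ_def by (rule sum_mono) (use colX in auto)
  then have "((1-\<alpha>)^n - PcXZ p \<alpha> n W) * ?q \<le> ((1-\<alpha>)^n - (\<Sum>z\<in>?A. \<Sum>y\<in>?A. PXY p \<alpha> n (ys z) y * W y z)) * ?q"
    using qn by (intro mult_right_mono) auto
  also have "\<dots> = (\<Sum>z\<in>?A. ((\<Sum>y\<in>?A. PXY p \<alpha> n y y * W y z) - (\<Sum>y\<in>?A. PXY p \<alpha> n (ys z) y * W y z)) * ?q)"
    unfolding sd[symmetric] sum_subtractf[symmetric] sum_distrib_right ..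
  also have "\<dots> \<le> (\<Sum>z\<in>?A. DD p \<alpha> n * ((\<Sum>y\<in>?A. PY p \<alpha> n y * W y z) - PY p \<alpha> n (ys z) * W (ys z) z))"
    by (rule sum_mono) (rule percol)
  also have "\<dots> = DD p \<alpha> n * (1 - PcYZ p \<alpha> n W)"
  proof -
    have "PcYZ p \<alpha> n W = (\<Sum>z\<in>?A. PY p \<alpha> n (ys z) * W (ys z) z)"
      unfolding PcYZ_def by (rule sum.cong) (use ys in auto)
    then show ?thesis unfolding sy[symmetric] by (simp only: sum_distrib_left[symmetric] sum_subtractf)
  qed
  finally show ?thesis .
qed


lemma coord_le_diag: "bern p a * bern \<alpha> (a \<noteq> b) \<le> bern p b * (1 - \<alpha>)"
  using a1 a2 p1 p2 pa ap_le by (cases a; cases b) (auto simp: bern_def algebra_simps)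

lemma coord_nonneg: "0 \<le> bern p a * bern \<alpha> c"
  using a1 a2 p1 p2 by (auto simp: bern_def)

lemma PXY_le_diag: "PXY p \<alpha> n x y \<le> PXY p \<alpha> n y y"
  unfolding PXY_diag unfolding PXY_def by (rule prod_mono) (use coord_le_diag coord_nonneg in auto)

lemma PXY_nonneg: "0 \<le> PXY p \<alpha> n x y"
  unfolding PXY_def by (rule prod_nonneg) (use coord_nonneg in auto)

lemma PXY_le1: "PXY p \<alpha> n x y \<le> 1"
  unfolding PXY_def by (rule prod_le_1) (use coord_nonneg a1 a2 p1 p2 in \<open>auto simp: bern_def intro!: mult_le_one\<close>)

lemma PXY_zero_bound:
  assumes x: "x \<in> words n" and nz: "x \<noteq> replicate n False"
  shows "PXY p \<alpha> n x (replicate n False) \<le> (p*\<alpha>) * ((1-p)*(1-\<alpha>)) ^ (n - 1)"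
proof -
  obtain k where k: "k < n" "x!k" 
  proof (rule ccontr)
    assume "\<not> thesis"
    with that have "\<forall>k<n. \<not> x!k" by blast
    then have "x = replicate n False" using x by (intro nth_equalityI) (auto simp: words_def)
    with nz show False by simp
  qed
  let ?f = "\<lambda>i. bern p (x!i) * bern \<alpha> (x!i)"
  have "PXY p \<alpha> n x (replicate n False) = (\<Prod>i<n. ?f i)"
    unfolding PXY_def by (rule prod.cong) auto
  also have "\<dots> = ?f k * (\<Prod>i\<in>{..<n}-{k}. ?f i)"
    using k by (intro prod.remove) auto
  also have "\<dots> \<le> (p*\<alpha>) * (\<Prod>i\<in>{..<n}-{k}. (1-p)*(1-\<alpha>))"
  proof -
    have "(\<Prod>i\<in>{..<n}-{k}. ?f i) \<le> (\<Prod>i\<in>{..<n}-{k}. (1-p)*(1-\<alpha>))"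
      by (rule prod_mono) (use coord_nonneg a1 a2 p1 p2 pa in \<open>auto simp: bern_def algebra_simps\<close>)
    moreover have "?f k = p * \<alpha>" using k by (simp add: bern_def)
    ultimately show ?thesis using a1 p1 by (simp add: mult_left_mono)
  qed
  also have "\<dots> = (p*\<alpha>) * ((1-p)*(1-\<alpha>)) ^ (n - 1)" using k by simp
  finally show ?thesis .
qed

lemma zsum:
  assumes n: "1 \<le> n" and z: "z \<in> words n"
  shows "(\<Sum>y\<in>words n. f y * zchan n \<gamma> y z) = f (replicate n True) * zchan n \<gamma> (replicate n True) z
          + (if z \<noteq> replicate n True then f z else 0)"
proof -
  let ?one = "replicate n True"
  have one: "?one \<in> words n" by (simp add: words_def)
  have "(\<Sum>y\<in>words n. f y * zchan n \<gamma> y z) = f ?one * zchan n \<gamma> ?one z + (\<Sum>y\<in>words n - {?one}. f y * zchan n \<gamma> y z)"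
    by (rule sum.remove[OF finite_words one])
  also have "(\<Sum>y\<in>words n - {?one}. f y * zchan n \<gamma> y z) = (\<Sum>y\<in>words n - {?one}. if y = z then f y else 0)"
    by (rule sum.cong) (auto simp: zchan_def)
  also have "\<dots> = (if z \<noteq> ?one then f z else 0)"
    using z by (simp add: finite_words)
  finally show ?thesis .
qed


lemma one_ne_zero_w: "1 \<le> n \<Longrightarrow> replicate n True \<noteq> replicate n False"
  by (cases n) auto

lemma zc_channel:
  assumes n: "1 \<le> n" and g: "0 \<le> \<gamma>" "\<gamma> \<le> 1"
  shows "is_channel n (zchan n \<gamma>)"
  unfolding is_channel_def
proof (intro ballI conjI)
  fix y z assume "y \<in> words n" "z \<in> words n"
  show "0 \<le> zchan n \<gamma> y z" using g by (auto simp: zchan_def)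
next
  fix y assume y: "y \<in> words n"
  let ?one = "replicate n True" and ?zero = "replicate n False"
  have ne: "?one \<noteq> ?zero" using one_ne_zero_w[OF n] .
  show "(\<Sum>z\<in>words n. zchan n \<gamma> y z) = 1"
  proof (cases "y = ?one")
    case True
    have "(\<Sum>z\<in>words n. zchan n \<gamma> y z) = (\<Sum>z\<in>words n. (if z = ?zero then \<gamma> else 0) + (if z = ?one then 1 - \<gamma> else 0))"
      using True ne by (intro sum.cong) (auto simp: zchan_def)
    also have "\<dots> = 1"
    proof -
      have "?one \<in> words n" "?zero \<in> words n" by (simp_all add: words_def)
      then show ?thesis by (simp add: sum.distrib finite_words)
    qed
    finally show ?thesis .
  next
    case False
    have "(\<Sum>z\<in>words n. zchan n \<gamma> y z) = (\<Sum>z\<in>words n. if z = y then 1 else 0)"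
      using False by (intro sum.cong) (auto simp: zchan_def)
    also have "\<dots> = 1" using y by (simp add: finite_words)
    finally show ?thesis .
  qed
qed

lemma PY_one: "PY p \<alpha> n (replicate n True) = qq p \<alpha> ^ n"
  by (simp add: PY_prod)

lemma zc_PcYZ:
  assumes n: "1 \<le> n"
  shows "1 - \<gamma> * qq p \<alpha> ^ n \<le> PcYZ p \<alpha> n (zchan n \<gamma>)"
proof -
  let ?one = "replicate n True" and ?zero = "replicate n False"
  have ne: "?one \<noteq> ?zero" using one_ne_zero_w[OF n] .
  have one: "?one \<in> words n" by (simp add: words_def)
  let ?g = "\<lambda>z. PY p \<alpha> n z - (if z = ?one then \<gamma> * PY p \<alpha> n ?one else 0)"
  have s: "(\<Sum>z\<in>words n. ?g z) = 1 - \<gamma> * qq p \<alpha> ^ n"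
    using one by (simp add: sum_subtractf finite_words sum_PY PY_one)
  have "(\<Sum>z\<in>words n. ?g z) \<le> PcYZ p \<alpha> n (zchan n \<gamma>)"
    unfolding PcYZ_def
  proof (rule sum_mono)
    fix z assume z: "z \<in> words n"
    have fin: "finite ((\<lambda>y. PY p \<alpha> n y * zchan n \<gamma> y z) ` words n)" by (simp add: finite_words)
    show "?g z \<le> Max ((\<lambda>y. PY p \<alpha> n y * zchan n \<gamma> y z) ` words n)"
    proof (cases "z = ?one")
      case True
      have "?g z = PY p \<alpha> n ?one * zchan n \<gamma> ?one z" using True ne by (simp add: zchan_def algebra_simps)
      also have "\<dots> \<le> Max ((\<lambda>y. PY p \<alpha> n y * zchan n \<gamma> y z) ` words n)"
        using one fin by (intro Max_ge) auto
      finally show ?thesis .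
    next
      case False
      have "?g z = PY p \<alpha> n z * zchan n \<gamma> z z" using False by (simp add: zchan_def)
      also have "\<dots> \<le> Max ((\<lambda>y. PY p \<alpha> n y * zchan n \<gamma> y z) ` words n)"
        using z fin by (intro Max_ge) auto
      finally show ?thesis .
    qed
  qed
  then show "1 - \<gamma> * qq p \<alpha> ^ n \<le> PcYZ p \<alpha> n (zchan n \<gamma>)" using s by simp
qed


lemma PXY_zero_one: "PXY p \<alpha> n (replicate n False) (replicate n True) = (\<alpha>*(1-p)) ^ n"
proof -
  have "PXY p \<alpha> n (replicate n False) (replicate n True) = (\<Prod>k<n. \<alpha>*(1-p))"
    unfolding PXY_def by (rule prod.cong) (auto simp: bern_def)
  then show ?thesis by simp
qed

lemma PXY_one_one: "PXY p \<alpha> n (replicate n True) (replicate n True) = ((1-\<alpha>)*p) ^ n"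
proof -
  have "PXY p \<alpha> n (replicate n True) (replicate n True) = (\<Prod>k<n. (1-\<alpha>)*p)"
    unfolding PXY_def by (rule prod.cong) (auto simp: bern_def)
  then show ?thesis by simp
qed

lemma PXY_zero_zero: "PXY p \<alpha> n (replicate n False) (replicate n False) = ((1-p)*(1-\<alpha>)) ^ n"
proof -
  have "PXY p \<alpha> n (replicate n False) (replicate n False) = (\<Prod>k<n. (1-p)*(1-\<alpha>))"
    unfolding PXY_def by (rule prod.cong) (auto simp: bern_def)
  then show ?thesis by simp
qed

lemma zc_PcXZ:
  assumes n: "1 \<le> n" and g: "0 \<le> \<gamma>" "\<gamma> \<le> ((1-p)*(1-\<alpha>)) ^ n - (p*\<alpha>) * ((1-p)*(1-\<alpha>)) ^ (n - 1)"
  shows "PcXZ p \<alpha> n (zchan n \<gamma>) \<le> (1-\<alpha>)^n - \<gamma> * DD p \<alpha> n"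
proof -
  let ?one = "replicate n True" and ?zero = "replicate n False"
  have ne: "?one \<noteq> ?zero" using one_ne_zero_w[OF n] .
  have one: "?one \<in> words n" and zero: "?zero \<in> words n" by (simp_all add: words_def)
  let ?h = "\<lambda>z. PXY p \<alpha> n z z + (if z = ?zero then \<gamma> * PXY p \<alpha> n ?zero ?one else 0)
                 - (if z = ?one then \<gamma> * PXY p \<alpha> n ?one ?one else 0)"
  have s: "(\<Sum>z\<in>words n. ?h z) = (1-\<alpha>)^n - \<gamma> * DD p \<alpha> n"
    using one zero by (simp add: sum_subtractf sum.distrib finite_words sum_diag PXY_zero_one PXY_one_one DD_def algebra_simps)
  have "PcXZ p \<alpha> n (zchan n \<gamma>) \<le> (\<Sum>z\<in>words n. ?h z)"
    unfolding PcXZ_def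
  proof (rule sum_mono)
    fix z assume z: "z \<in> words n"
    show "Max ((\<lambda>x. \<Sum>y\<in>words n. PXY p \<alpha> n x y * zchan n \<gamma> y z) ` words n) \<le> ?h z"
    proof (subst Max_le_iff)
      show "finite ((\<lambda>x. \<Sum>y\<in>words n. PXY p \<alpha> n x y * zchan n \<gamma> y z) ` words n)" by (simp add: finite_words)
      show "(\<lambda>x. \<Sum>y\<in>words n. PXY p \<alpha> n x y * zchan n \<gamma> y z) ` words n \<noteq> {}" using zero by blast
      show "\<forall>a\<in>(\<lambda>x. \<Sum>y\<in>words n. PXY p \<alpha> n x y * zchan n \<gamma> y z) ` words n. a \<le> ?h z"
      proof
        fix a assume "a \<in> (\<lambda>x. \<Sum>y\<in>words n. PXY p \<alpha> n x y * zchan n \<gamma> y z) ` words n"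
        then obtain x where x: "x \<in> words n" and a: "a = (\<Sum>y\<in>words n. PXY p \<alpha> n x y * zchan n \<gamma> y z)" by auto
        have aeq: "a = PXY p \<alpha> n x ?one * zchan n \<gamma> ?one z + (if z \<noteq> ?one then PXY p \<alpha> n x z else 0)"
          unfolding a by (rule zsum[OF n z])
        show "a \<le> ?h z"
        proof (cases "z = ?zero")
          case True
          have "PXY p \<alpha> n x ?zero + \<gamma> * PXY p \<alpha> n x ?one \<le> PXY p \<alpha> n ?zero ?zero + \<gamma> * PXY p \<alpha> n ?zero ?one"
          proof (cases "x = ?zero")
            case False
            have b1: "PXY p \<alpha> n x ?zero \<le> (p*\<alpha>) * ((1-p)*(1-\<alpha>)) ^ (n - 1)"
              by (rule PXY_zero_bound[OF x False])
            have b2: "\<gamma> * PXY p \<alpha> n x ?one \<le> \<gamma>"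
              using mult_left_mono[OF PXY_le1[of n x ?one] g(1)] by simp
            have b3: "0 \<le> \<gamma> * PXY p \<alpha> n ?zero ?one" using g(1) PXY_nonneg by simp
            show ?thesis using b1 b2 b3 g(2) PXY_zero_zero by simp
          qed simp
          then show ?thesis using aeq True ne by (simp add: zchan_def algebra_simps)
        next
          case False
          note zf = False
          show ?thesis
          proof (cases "z = ?one")
            case True
            have "(1 - \<gamma>) * PXY p \<alpha> n x ?one \<le> (1 - \<gamma>) * PXY p \<alpha> n ?one ?one"
            proof (cases "\<gamma> \<le> 1")
              case True then show ?thesis using PXY_le_diag by (intro mult_left_mono) auto
            next
              case False
              have "(\<gamma> - 1) * PXY p \<alpha> n x ?one \<ge> 0" using False PXY_nonneg by simp
              moreover have "\<gamma> \<le> 1"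
              proof -
                have "((1-p)*(1-\<alpha>)) ^ n \<le> 1" using p1 p2 a1 a2 by (intro power_le_one) (auto intro!: mult_le_one)
                moreover have "0 \<le> (p*\<alpha>) * ((1-p)*(1-\<alpha>)) ^ (n - 1)" using p1 p2 a1 a2 by simp
                ultimately show ?thesis using g(2) by linarith
              qed
              ultimately show ?thesis using False by simp
            qed
            then show ?thesis using aeq True ne by (simp add: zchan_def algebra_simps)
          next
            case False
            then show ?thesis using aeq zf PXY_le_diag[of n x z] by (simp add: zchan_def)
          qed
        qed
      qed
    qed
  qed
  then show ?thesis using s by simp
qed

end



lemma main_aux:
  fixes p \<alpha> :: real and n :: nat
  assumes n: "n \<ge> 1"
    and p1: "1/2 \<le> p" and p2: "p < 1"
    and a1: "0 \<le> \<alpha>" and a2: "\<alpha> < 1/2" and pa: "1 - \<alpha> > p"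
  shows "\<exists>\<epsilon>L. p \<le> \<epsilon>L \<and> \<epsilon>L < 1 - \<alpha> \<and>
          (\<forall>\<epsilon>. \<epsilon>L \<le> \<epsilon> \<and> \<epsilon> \<le> 1 - \<alpha> \<longrightarrow>
             (hlow p \<alpha> n \<epsilon>) ^ n = 1 - zeta p \<alpha> n \<epsilon> * (\<alpha> * (1 - p) + (1 - \<alpha>) * p) ^ n \<and>
             achieves p \<alpha> n \<epsilon> (zchan n (zeta p \<alpha> n \<epsilon>)))"
proof -
  note H = p1 p2 a1 a2 pa
  have n0: "0 < n" using n by simp
  define m where "m = (1-p)*(1-\<alpha>)"
  define D where "D = DD p \<alpha> n"
  define q where "q = qq p \<alpha>"
  have m0: "0 < m" using p2 a2 by (simp add: m_def)
  have mpa: "0 < m - p*\<alpha>" using pa by (simp add: m_def algebra_simps)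
  have G1: "0 < m^n - (p*\<alpha>) * m^(n-1)"
  proof -
    have "m^n = m * m^(n-1)" using n by (cases n) auto
    then have "m^n - (p*\<alpha>) * m^(n-1) = (m - p*\<alpha>) * m^(n-1)" by (simp add: algebra_simps)
    then show ?thesis using mpa m0 by simp
  qed
  define G0 where "G0 = min 1 (m^n - (p*\<alpha>) * m^(n-1))"
  have G0pos: "0 < G0" "G0 \<le> 1" using G1 by (auto simp: G0_def)
  have apos: "\<alpha>*(1-p) < (1-\<alpha>)*p"
  proof -
    have "\<alpha>*(1-p) \<le> \<alpha> * p" using a1 p1 by (intro mult_left_mono) auto
    also have "\<alpha> * p < (1-\<alpha>)*p" using a2 p1 by (intro mult_strict_right_mono) auto
    finally show ?thesis .
  qed
  have D0: "0 < D" unfolding D_def DD_def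
    using power_strict_mono[OF apos _ n0] a1 p2 by simp
  have Dle: "D \<le> (1-\<alpha>)^n"
  proof -
    have "D \<le> ((1-\<alpha>)*p)^n" unfolding D_def DD_def using a1 p2 by simp
    also have "\<dots> \<le> (1-\<alpha>)^n" using p2 p1 a2 by (intro power_mono) (auto intro: mult_left_le)
    finally show ?thesis .
  qed
  define A where "A = (1-\<alpha>)^n - G0 * D"
  have A0: "0 \<le> A" unfolding A_def using G0pos Dle D0 mult_left_le_one_le[of D G0] by (smt (verit))
  have Alt: "A < (1-\<alpha>)^n" unfolding A_def using G0pos D0 by simp
  define \<epsilon>L where "\<epsilon>L = max p (root n A)"
  have q01: "0 < q" "q \<le> 1" using q_facts[OF H] p2 by (auto simp: q_def)
  show ?thesis
  proof (intro exI[of _ \<epsilon>L] conjI allI impI)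
    show "p \<le> \<epsilon>L" by (simp add: \<epsilon>L_def)
    have "root n A < root n ((1-\<alpha>)^n)" using Alt n0 by simp
    also have "\<dots> = 1 - \<alpha>" using a2 n0 by (simp add: real_root_power_cancel)
    finally show "\<epsilon>L < 1 - \<alpha>" using pa by (simp add: \<epsilon>L_def)
  next
    fix \<epsilon> assume e: "\<epsilon>L \<le> \<epsilon> \<and> \<epsilon> \<le> 1 - \<alpha>"
    have e0: "0 \<le> \<epsilon>" using e p1 by (simp add: \<epsilon>L_def)
    have eA: "A \<le> \<epsilon>^n"
    proof -
      have "root n A \<le> \<epsilon>" using e by (simp add: \<epsilon>L_def)
      then have "root n A ^ n \<le> \<epsilon>^n" using A0 by (intro power_mono) (auto simp: real_root_ge_zero)
      then show ?thesis using A0 n0 by simp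
    qed
    have eup: "\<epsilon>^n \<le> (1-\<alpha>)^n" using e e0 by (intro power_mono) auto
    define \<gamma> where "\<gamma> = zeta p \<alpha> n \<epsilon>"
    have \<gamma>def: "\<gamma> = ((1-\<alpha>)^n - \<epsilon>^n) / D" by (simp add: \<gamma>_def zeta_def D_def DD_def)
    have g0: "0 \<le> \<gamma>" using eup D0 by (simp add: \<gamma>def)
    have gG: "\<gamma> \<le> G0" using eA D0 by (simp add: \<gamma>def A_def pos_divide_le_eq)
    have g1: "\<gamma> \<le> 1" using gG G0pos by simp
    have g2: "\<gamma> \<le> ((1-p)*(1-\<alpha>)) ^ n - (p*\<alpha>) * ((1-p)*(1-\<alpha>)) ^ (n - 1)"
      using gG by (simp add: G0_def m_def)
    have gD: "\<gamma> * D = (1-\<alpha>)^n - \<epsilon>^n" using D0 by (simp add: \<gamma>def)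
    let ?Z = "zchan n \<gamma>"
    have rootpow: "root n (\<epsilon>^n) = \<epsilon>" using e0 n0 by (simp add: real_root_power_cancel)
    have chZ: "is_channel n ?Z" by (rule zc_channel[OF H n g0 g1])
    have "PcXZ p \<alpha> n ?Z \<le> \<epsilon>^n" using zc_PcXZ[OF H n g0 g2] gD by (simp add: D_def)
    then have "root n (PcXZ p \<alpha> n ?Z) \<le> \<epsilon>" using n0 rootpow by (metis real_root_le_iff)
    then have fZ: "feasible p \<alpha> n \<epsilon> ?Z" using chZ by (simp add: feasible_def)
    have lowZ: "1 - \<gamma> * q^n \<le> PcYZ p \<alpha> n ?Z" using zc_PcYZ[OF H n] by (simp add: q_def)
    have upW: "PcYZ p \<alpha> n W \<le> 1 - \<gamma> * q^n" if fW: "feasible p \<alpha> n \<epsilon> W" for W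
    proof -
      have ch: "is_channel n W" and r: "root n (PcXZ p \<alpha> n W) \<le> root n (\<epsilon>^n)"
        using fW rootpow by (auto simp: feasible_def)
      have X: "PcXZ p \<alpha> n W \<le> \<epsilon>^n" using r n0 by simp
      have c: "((1-\<alpha>)^n - PcXZ p \<alpha> n W) * q^n \<le> D * (1 - PcYZ p \<alpha> n W)"
        using converse[OF H ch] by (simp add: q_def D_def)
      have "\<gamma> * D * q^n \<le> ((1-\<alpha>)^n - PcXZ p \<alpha> n W) * q^n"
        unfolding gD using X q01 by (intro mult_right_mono) auto
      also note c
      finally have "D * (\<gamma> * q^n) \<le> D * (1 - PcYZ p \<alpha> n W)" by (simp add: algebra_simps)
      then have "\<gamma> * q^n \<le> 1 - PcYZ p \<alpha> n W" using D0 by simp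
      then show ?thesis by simp
    qed
    have eqZ: "PcYZ p \<alpha> n ?Z = 1 - \<gamma> * q^n" using upW[OF fZ] lowZ by simp
    have nonneg: "0 \<le> 1 - \<gamma> * q^n"
    proof -
      have "q^n \<le> 1" using q01 by (intro power_le_one) auto
      then have "\<gamma> * q^n \<le> 1" using g0 g1 q01 mult_le_one[of \<gamma> "q^n"] by simp
      then show ?thesis by simp
    qed
    have hl: "hlow p \<alpha> n \<epsilon> = root n (PcYZ p \<alpha> n ?Z)"
      unfolding hlow_def
    proof (rule cSup_eq_maximum)
      show "root n (PcYZ p \<alpha> n ?Z) \<in> {root n (PcYZ p \<alpha> n W) | W. feasible p \<alpha> n \<epsilon> W}" using fZ by blast
    next
      fix x assume "x \<in> {root n (PcYZ p \<alpha> n W) | W. feasible p \<alpha> n \<epsilon> W}"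
      then obtain W where "feasible p \<alpha> n \<epsilon> W" "x = root n (PcYZ p \<alpha> n W)" by blast
      then show "x \<le> root n (PcYZ p \<alpha> n ?Z)" using upW eqZ n0 by simp
    qed
    show "(hlow p \<alpha> n \<epsilon>) ^ n = 1 - zeta p \<alpha> n \<epsilon> * (\<alpha> * (1 - p) + (1 - \<alpha>) * p) ^ n"
      using hl eqZ nonneg n0 by (simp add: \<gamma>_def q_def qq_def)
    show "achieves p \<alpha> n \<epsilon> (zchan n (zeta p \<alpha> n \<epsilon>))"
      using fZ hl by (simp add: achieves_def \<gamma>_def)
  qed
qed

theorem theorem4:
  fixes p \<alpha> :: real and n :: nat
  assumes "n \<ge> 1"
    and "1/2 \<le> p" and "p < 1"
    and "0 \<le> \<alpha>" and "\<alpha> < 1/2" and "1 - \<alpha> > p"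
  shows "\<exists>\<epsilon>L. p \<le> \<epsilon>L \<and> \<epsilon>L < 1 - \<alpha> \<and>
          (\<forall>\<epsilon>. \<epsilon>L \<le> \<epsilon> \<and> \<epsilon> \<le> 1 - \<alpha> \<longrightarrow>
             (hlow p \<alpha> n \<epsilon>) ^ n = 1 - zeta p \<alpha> n \<epsilon> * (\<alpha> * (1 - p) + (1 - \<alpha>) * p) ^ n \<and>
             achieves p \<alpha> n \<epsilon> (zchan n (zeta p \<alpha> n \<epsilon>)))"
  by (rule main_aux[OF assms])

end
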